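(* Let $D$ be an integral domain. Then $t\text{-}\dim(D)\le t\text{-}\dim(D[X]_A)\le t\text{-}\dim(D[X])$.
   Context: $X$ is an indeterminate over $D$, $A=\{f\in D[X]\mid f(0)=1\}$, and $D[X]_A$ is the localization at $A$. For an integral domain $E$ with quotient field $K$ and a nonzero fractional ideal $I$, let $I^{-1}=\{x\in K\mid xI\subseteq E\}$, $I_v=(I^{-1})^{-1}$, and $I_t=\bigcup J_v$ where $J$ ranges over the nonzero finitely generated fractional ideals contained in $I$. An ideal $I$ is a $t$-ideal if $I_t=I$; a prime $t$-ideal is a prime ideal that is a $t$-ideal; a maximal $t$-ideal is maximal among proper $t$-ideals. The $t$-height of a prime $t$-ideal $P$ is the supremum of $n$ such that there is a chain $P=P_0\supsetneq P_1\supsetneq\cdots\supsetneq P_n=(0)$ of prime $t$-ideals (with $(0)$ at the bottom), and $t\text{-}\dim(E)=\sup\{t\text{-ht}(P)\mid P \text{ a maximal } t\text{-ideal of } E\}$. *)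

theory Defs
  imports "HOL-Computational_Algebra.Polynomial" "HOL-Computational_Algebra.Fraction_Field"
    "HOL-Library.Extended_Nat"
begin

text \<open>An integral domain E is represented as a subring of an ambient field 'k
  (containing its quotient field). Inverses are taken inside 'k; for nonzero
  (fractional) ideals this coincides with taking them inside the quotient field of E.\<close>

definition is_ideal :: "'k::field set \<Rightarrow> 'k set \<Rightarrow> bool" where
  "is_ideal E I \<longleftrightarrow> I \<subseteq> E \<and> 0 \<in> I \<and> (\<forall>x\<in>I. \<forall>y\<in>I. x + y \<in> I) \<and> (\<forall>r\<in>E. \<forall>x\<in>I. r * x \<in> I)"

definition frac_inv :: "'k::field set \<Rightarrow> 'k set \<Rightarrow> 'k set" where
  "frac_inv E I = {x. \<forall>y\<in>I. x * y \<in> E}"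

definition v_closure :: "'k::field set \<Rightarrow> 'k set \<Rightarrow> 'k set" where
  "v_closure E I = frac_inv E (frac_inv E I)"

definition fin_gen :: "'k::field set \<Rightarrow> 'k set \<Rightarrow> 'k set" where
  "fin_gen E S = {(\<Sum>s\<in>S. c s * s) | c. \<forall>s\<in>S. c s \<in> E}"

definition t_closure :: "'k::field set \<Rightarrow> 'k set \<Rightarrow> 'k set" where
  "t_closure E I = \<Union>{v_closure E (fin_gen E S) | S. finite S \<and> S \<subseteq> I \<and>
      fin_gen E S \<noteq> {0} \<and> fin_gen E S \<subseteq> I}"

text \<open>t-ideals (integral); the zero ideal is a t-ideal by the usual convention.\<close>
definition is_t_ideal :: "'k::field set \<Rightarrow> 'k set \<Rightarrow> bool" where
  "is_t_ideal E I \<longleftrightarrow> is_ideal E I \<and> (I = {0} \<or> t_closure E I = I)"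

definition is_prime_ideal :: "'k::field set \<Rightarrow> 'k set \<Rightarrow> bool" where
  "is_prime_ideal E P \<longleftrightarrow> is_ideal E P \<and> P \<noteq> E \<and>
     (\<forall>a\<in>E. \<forall>b\<in>E. a * b \<in> P \<longrightarrow> a \<in> P \<or> b \<in> P)"

definition is_prime_t_ideal :: "'k::field set \<Rightarrow> 'k set \<Rightarrow> bool" where
  "is_prime_t_ideal E P \<longleftrightarrow> is_prime_ideal E P \<and> is_t_ideal E P"

definition is_max_t_ideal :: "'k::field set \<Rightarrow> 'k set \<Rightarrow> bool" where
  "is_max_t_ideal E M \<longleftrightarrow> is_t_ideal E M \<and> M \<noteq> E \<and>
     (\<forall>N. is_t_ideal E N \<and> N \<noteq> E \<and> M \<subseteq> N \<longrightarrow> N = M)"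

definition t_ht :: "'k::field set \<Rightarrow> 'k set \<Rightarrow> enat" where
  "t_ht E P = Sup {enat n | n. \<exists>c :: nat \<Rightarrow> 'k set. c 0 = P \<and> c n = {0} \<and>
      (\<forall>i<n. c (Suc i) \<subset> c i) \<and> (\<forall>i\<le>n. is_prime_t_ideal E (c i))}"

definition t_dim :: "'k::field set \<Rightarrow> enat" where
  "t_dim E = Sup {t_ht E P | P. is_max_t_ideal E P}"

text \<open>D inside its quotient field; D[X] and D[X]_A inside the quotient field of D[X].\<close>
definition dom_ring :: "'a::idom fract set" where
  "dom_ring = range (\<lambda>a. Fract a 1)"

definition poly_ring :: "'a::idom poly fract set" where
  "poly_ring = range (\<lambda>p. Fract p 1)"

definition loc_poly_ring :: "'a::idom poly fract set" where
  "loc_poly_ring = {Fract f g | f g. poly g 0 = 1}"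

end

theory Submission
  imports Defs
begin

definition sr :: "'k::field set \<Rightarrow> bool" where
  "sr E \<longleftrightarrow> 0\<in>E \<and> 1\<in>E \<and> (\<forall>x\<in>E. \<forall>y\<in>E. x+y\<in>E \<and> x*y\<in>E \<and> -x\<in>E)"

definition vS :: "'k::field set \<Rightarrow> 'k set \<Rightarrow> 'k set" where
  "vS E S = {x. \<forall>y. (\<forall>s\<in>S. y*s\<in>E) \<longrightarrow> x*y\<in>E}"

lemma sr_sum: "finite S \<Longrightarrow> sr E \<Longrightarrow> (\<forall>s\<in>S. f s \<in> E) \<Longrightarrow> sum f S \<in> E"
proof (induction S rule: finite_induct) qed (auto simp: sr_def)

lemma fin_gen_mem: assumes "sr E" "finite S" "s\<in>S" shows "s \<in> fin_gen E S"
proof -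
  have "(\<Sum>t\<in>S. (if t = s then 1 else 0) * t) = (\<Sum>t\<in>S. if t = s then t else 0)"
    by (rule sum.cong) auto
  also have "\<dots> = s" using assms by simp
  finally show ?thesis unfolding fin_gen_def using assms
    by (intro CollectI exI[of _ "\<lambda>t. if t = s then 1 else 0"]) (auto simp: sr_def)
qed

lemma frac_inv_fin_gen: assumes "sr E" "finite S"
  shows "frac_inv E (fin_gen E S) = {y. \<forall>s\<in>S. y*s\<in>E}"
proof
  show "frac_inv E (fin_gen E S) \<subseteq> {y. \<forall>s\<in>S. y*s\<in>E}"
    using fin_gen_mem[OF assms] unfolding frac_inv_def by auto
  show "{y. \<forall>s\<in>S. y*s\<in>E} \<subseteq> frac_inv E (fin_gen E S)"
  proof (clarsimp simp: frac_inv_def fin_gen_def)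
    fix y c assume h: "\<forall>s\<in>S. y*s\<in>E" "\<forall>s\<in>S. c s \<in> E"
    have "y * (\<Sum>s\<in>S. c s * s) = (\<Sum>s\<in>S. c s * (y * s))"
      by (simp add: sum_distrib_left mult.assoc mult.left_commute)
    also have "\<dots> \<in> E" using h assms by (intro sr_sum) (auto simp: sr_def)
    finally show "y * (\<Sum>s\<in>S. c s * s) \<in> E" .
  qed
qed

lemma v_fin_gen: "sr E \<Longrightarrow> finite S \<Longrightarrow> v_closure E (fin_gen E S) = vS E S"
  unfolding v_closure_def frac_inv_fin_gen by (simp add: frac_inv_def vS_def mult.commute)

lemma ideal_sum: "finite S \<Longrightarrow> is_ideal E I \<Longrightarrow> (\<forall>s\<in>S. f s \<in> I) \<Longrightarrow> sum f S \<in> I"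
proof (induction S rule: finite_induct) qed (auto simp: is_ideal_def)

lemma fin_gen_sub: "is_ideal E I \<Longrightarrow> finite S \<Longrightarrow> S \<subseteq> I \<Longrightarrow> fin_gen E S \<subseteq> I"
  unfolding fin_gen_def by (auto intro!: ideal_sum simp: is_ideal_def)

lemma fin_gen_nz: assumes "sr E" "finite S"
  shows "fin_gen E S \<noteq> {0} \<longleftrightarrow> (\<exists>s\<in>S. s\<noteq>0)"
proof
  assume "fin_gen E S \<noteq> {0}"
  moreover have "fin_gen E S \<noteq> {}" using assms unfolding fin_gen_def
    by (auto intro!: exI[of _ "\<lambda>_. 0"] simp: sr_def)
  ultimately obtain z where "z \<in> fin_gen E S" "z \<noteq> 0" by blast
  then show "\<exists>s\<in>S. s\<noteq>0" unfolding fin_gen_def by (force intro: sum.neutral)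
next
  assume "\<exists>s\<in>S. s\<noteq>0" then show "fin_gen E S \<noteq> {0}" using fin_gen_mem[OF assms] by blast
qed

lemma t_closure_char: assumes "sr E" "is_ideal E I"
  shows "t_closure E I = \<Union>{vS E S | S. finite S \<and> S \<subseteq> I \<and> (\<exists>s\<in>S. s\<noteq>0)}"
  unfolding t_closure_def using fin_gen_sub[OF assms(2)] fin_gen_nz[OF assms(1)] v_fin_gen[OF assms(1)]
  by (smt (verit) Collect_cong)

lemma t_ideal_vS: assumes "is_t_ideal E I" "sr E" "finite S" "S \<subseteq> I" "\<exists>s\<in>S. s\<noteq>0"
  shows "vS E S \<subseteq> I"
proof -
  have id: "is_ideal E I" using assms(1) by (simp add: is_t_ideal_def)
  have "I \<noteq> {0}" using assms by auto
  then have "t_closure E I = I" using assms(1) by (simp add: is_t_ideal_def)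
  then show ?thesis using assms t_closure_char[OF assms(2) id] by blast
qed

lemma t_idealI: assumes "sr E" "is_ideal E I"
  "\<And>S. finite S \<Longrightarrow> S \<subseteq> I \<Longrightarrow> \<exists>s\<in>S. s\<noteq>0 \<Longrightarrow> vS E S \<subseteq> I"
  shows "is_t_ideal E I"
proof (cases "I = {0}")
  case True then show ?thesis using assms by (simp add: is_t_ideal_def)
next
  case False
  then obtain z where z: "z \<in> I" "z \<noteq> 0" using assms(2) unfolding is_ideal_def by blast
  have "I \<subseteq> t_closure E I"
  proof
    fix x assume x: "x \<in> I"
    have "x \<in> vS E {x, z}" by (auto simp: vS_def mult.commute)
    then show "x \<in> t_closure E I" unfolding t_closure_char[OF assms(1,2)] using x z
      by (intro UnionI[of "vS E {x,z}"]) auto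
  qed
  moreover have "t_closure E I \<subseteq> I" unfolding t_closure_char[OF assms(1,2)] using assms(3) by blast
  ultimately show ?thesis using assms by (simp add: is_t_ideal_def)
qed

lemma ideal_one: "sr E \<Longrightarrow> is_ideal E I \<Longrightarrow> 1 \<in> I \<longleftrightarrow> I = E"
  unfolding is_ideal_def sr_def by (metis mult.right_neutral subsetI subset_antisym)

lemma ideal_neg: "sr E \<Longrightarrow> is_ideal E I \<Longrightarrow> x \<in> I \<Longrightarrow> -x \<in> I"
  unfolding is_ideal_def sr_def by (metis mult_minus1)


lemma max_t_prime: assumes sr: "sr E" and M: "is_max_t_ideal E M"
  shows "is_prime_ideal E M"
proof -
  have Mt: "is_t_ideal E M" and MneE: "M \<noteq> E" and Mmax: "\<And>N. is_t_ideal E N \<Longrightarrow> N \<noteq> E \<Longrightarrow> M \<subseteq> N \<Longrightarrow> N = M"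
    using M by (auto simp: is_max_t_ideal_def)
  have Mi: "is_ideal E M" using Mt by (simp add: is_t_ideal_def)
  have "a \<in> M \<or> b \<in> M" if ab: "a \<in> E" "b \<in> E" "a*b \<in> M" for a b
  proof (rule ccontr)
    assume "\<not> (a \<in> M \<or> b \<in> M)"
    then have na: "a \<notin> M" and nb: "b \<notin> M" by auto
    have b0: "b \<noteq> 0" using nb Mi by (auto simp: is_ideal_def)
    define N where "N = {x\<in>E. b*x \<in> M}"
    have Ni: "is_ideal E N" using Mi ab sr unfolding N_def is_ideal_def sr_def
      by (auto simp: distrib_left mult.left_commute)
    have Nt: "is_t_ideal E N"
    proof (rule t_idealI[OF sr Ni])
      fix S assume S: "finite S" "S \<subseteq> N" "\<exists>s\<in>S. s\<noteq>0"
      show "vS E S \<subseteq> N"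
      proof
        fix x assume x: "x \<in> vS E S"
        have "\<forall>s\<in>S. 1*s \<in> E" using S unfolding N_def by auto
        then have "x * 1 \<in> E" using x unfolding vS_def by blast
        then have xE: "x \<in> E" by simp
        have sub: "(\<lambda>s. b*s) ` S \<subseteq> M" using S unfolding N_def by auto
        have nz: "\<exists>s\<in>(\<lambda>s. b*s) ` S. s\<noteq>0" using S b0 by auto
        have "b*x \<in> vS E ((\<lambda>s. b*s) ` S)"
          unfolding vS_def
        proof (intro CollectI allI impI)
          fix y assume "\<forall>s\<in>(\<lambda>s. b*s) ` S. y*s\<in>E"
          then have "\<forall>s\<in>S. (y*b)*s \<in> E" by (auto simp: mult.assoc)
          then have "x*(y*b) \<in> E" using x unfolding vS_def by blast
          then show "b*x*y \<in> E" by (simp add: ac_simps)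
        qed
        then have "b*x \<in> M" using t_ideal_vS[OF Mt sr _ sub nz] S by auto
        then show "x \<in> N" using xE unfolding N_def by auto
      qed
    qed
    have MN: "M \<subseteq> N" using Mi ab unfolding N_def is_ideal_def by (auto simp: mult.commute)
    have "a \<in> N" using ab unfolding N_def by (simp add: mult.commute)
    then have "N \<noteq> M" using na by auto
    then have "N = E" using Mmax[OF Nt _ MN] by blast
    then have "1 \<in> N" using sr by (simp add: sr_def)
    then show False using nb unfolding N_def by simp
  qed
  then show ?thesis using Mi MneE by (simp add: is_prime_ideal_def)
qed

lemma chain_fin: assumes "finite S" "C \<noteq> {}" "chain\<^sub>\<subseteq> C" "S \<subseteq> \<Union>C"
  shows "\<exists>X\<in>C. S \<subseteq> X"
  using assms
proof (induction S rule: finite_induct)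
  case empty then show ?case by auto
next
  case (insert x F)
  then obtain X where X: "X\<in>C" "F \<subseteq> X" by auto
  obtain Y where Y: "Y \<in> C" "x \<in> Y" using insert by auto
  show ?case using X Y insert(5) unfolding chain_subset_def
    by (metis insert_subset subset_trans)
qed

lemma exists_max_t: assumes sr: "sr E" and I: "is_t_ideal E I" "I \<noteq> E"
  shows "\<exists>M. is_max_t_ideal E M \<and> I \<subseteq> M"
proof -
  define A where "A = {N. is_t_ideal E N \<and> N \<noteq> E \<and> I \<subseteq> N}"
  have "\<exists>U\<in>A. \<forall>X\<in>C. X \<subseteq> U" if C: "C \<in> chains A" for C
  proof (cases "C = {}")
    case True then show ?thesis using I unfolding A_def by auto
  next
    case False
    have CA: "C \<subseteq> A" and ch: "chain\<^sub>\<subseteq> C" using C by (auto simp: chains_def)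
    have mem: "\<And>X. X \<in> C \<Longrightarrow> is_ideal E X \<and> is_t_ideal E X \<and> X \<noteq> E \<and> I \<subseteq> X"
      using CA unfolding A_def is_t_ideal_def by blast
    have Ui: "is_ideal E (\<Union>C)"
    proof -
      have "\<Union>C \<subseteq> E" using mem unfolding is_ideal_def by blast
      moreover have "0 \<in> \<Union>C" using mem False unfolding is_ideal_def by blast
      moreover have "x + y \<in> \<Union>C" if xy: "x \<in> \<Union>C" "y \<in> \<Union>C" for x y
      proof -
        obtain X Y where "X\<in>C" "Y\<in>C" "x\<in>X" "y\<in>Y" using xy by blast
        then show ?thesis using ch mem unfolding chain_subset_def is_ideal_def
          by (metis UnionI subsetD)
      qed
      moreover have "r * x \<in> \<Union>C" if "r\<in>E" "x \<in> \<Union>C" for r x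
        using that mem unfolding is_ideal_def by blast
      ultimately show ?thesis unfolding is_ideal_def by blast
    qed
    have Ut: "is_t_ideal E (\<Union>C)"
    proof (rule t_idealI[OF sr Ui])
      fix S assume S: "finite S" "S \<subseteq> \<Union>C" "\<exists>s\<in>S. s\<noteq>0"
      then obtain X where "X \<in> C" "S \<subseteq> X" using chain_fin[OF S(1) False ch] by auto
      then show "vS E S \<subseteq> \<Union>C" using t_ideal_vS[OF _ sr S(1) _ S(3)] mem by blast
    qed
    have "1 \<notin> \<Union>C" using mem ideal_one[OF sr] by blast
    then have "\<Union>C \<noteq> E" using sr by (auto simp: sr_def)
    moreover have "I \<subseteq> \<Union>C" using mem False by blast
    ultimately show ?thesis using Ut unfolding A_def by blast
  qed
  then obtain M where M: "M \<in> A" "\<forall>X\<in>A. M \<subseteq> X \<longrightarrow> X = M"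
    using Zorn_Lemma2[of A] by blast
  then have "is_max_t_ideal E M" unfolding A_def is_max_t_ideal_def by blast
  then show ?thesis using M unfolding A_def by blast
qed

definition tchain :: "'k::field set \<Rightarrow> (nat \<Rightarrow> 'k set) \<Rightarrow> nat \<Rightarrow> bool" where
  "tchain E c n \<longleftrightarrow> c n = {0} \<and> (\<forall>i<n. c (Suc i) \<subset> c i) \<and> (\<forall>i\<le>n. is_prime_t_ideal E (c i))"

lemma t_ht_eq: "t_ht E P = Sup {enat n | n. \<exists>c. c 0 = P \<and> tchain E c n}"
  unfolding t_ht_def tchain_def by simp

lemma t_ht_ge: "tchain E c n \<Longrightarrow> enat n \<le> t_ht E (c 0)"
  unfolding t_ht_eq by (rule Sup_upper) blast

lemma t_ht_extend: assumes ch: "tchain E c n" and M: "is_prime_t_ideal E M" "c 0 \<subseteq> M"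
  shows "enat n \<le> t_ht E M"
proof (cases "c 0 = M")
  case True then show ?thesis using t_ht_ge[OF ch] by simp
next
  case False
  define d where "d i = (if i = 0 then M else c (i - 1))" for i
  have "tchain E d (Suc n)" unfolding tchain_def
  proof (intro conjI allI impI)
    show "d (Suc n) = {0}" using ch by (simp add: d_def tchain_def)
    fix i
    show "d (Suc i) \<subset> d i" if "i < Suc n"
    proof (cases i)
      case 0 then show ?thesis using M False by (simp add: d_def)
    next
      case (Suc j) then show ?thesis using ch that by (simp add: d_def tchain_def)
    qed
    show "is_prime_t_ideal E (d i)" if "i \<le> Suc n"
    proof (cases i)
      case 0 then show ?thesis using M by (simp add: d_def)
    next
      case (Suc j) then show ?thesis using ch that by (simp add: d_def tchain_def)
    qed
  qed
  then have "enat (Suc n) \<le> t_ht E M" using t_ht_ge[of E d "Suc n"] by (simp add: d_def)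
  moreover have "enat n \<le> enat (Suc n)" by simp
  ultimately show ?thesis by (rule order_trans[rotated])
qed

lemma t_dim_le:
  assumes "\<And>P c n. is_max_t_ideal E P \<Longrightarrow> c 0 = P \<Longrightarrow> tchain E c n \<Longrightarrow>
     \<exists>Q. is_max_t_ideal F Q \<and> enat n \<le> t_ht F Q"
  shows "t_dim E \<le> t_dim F"
  unfolding t_dim_def
proof (rule Sup_least)
  fix w assume "w \<in> {t_ht E P |P. is_max_t_ideal E P}"
  then obtain P where P: "is_max_t_ideal E P" and w: "w = t_ht E P" by blast
  show "w \<le> Sup {t_ht F P |P. is_max_t_ideal F P}" unfolding w
    unfolding t_ht_eq[of E P]
  proof (rule Sup_least)
    fix z assume "z \<in> {enat n |n. \<exists>c. c 0 = P \<and> tchain E c n}"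
    then obtain n c where "z = enat n" "tchain E c n" "c 0 = P" by blast
    then obtain Q where Q: "is_max_t_ideal F Q" "enat n \<le> t_ht F Q" using assms[OF P \<open>c 0 = P\<close> \<open>tchain E c n\<close>] by blast
    have "t_ht F Q \<le> Sup {t_ht F P |P. is_max_t_ideal F P}" by (rule Sup_upper) (use Q in blast)
    then show "z \<le> Sup {t_ht F P |P. is_max_t_ideal F P}" using Q \<open>z = enat n\<close> by simp
  qed
qed

lemma sr_dom: "sr (dom_ring :: 'a::idom fract set)"
  unfolding sr_def dom_ring_def
  by (auto simp: Zero_fract_def One_fract_def intro!: range_eqI)

lemma sr_poly: "sr (poly_ring :: 'a::idom poly fract set)"
  unfolding sr_def poly_ring_def
  by (auto simp: Zero_fract_def One_fract_def intro!: range_eqI)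

lemma loc_mem: "x \<in> loc_poly_ring \<longleftrightarrow> (\<exists>f g. x = Fract f g \<and> poly g 0 = 1)"
  by (simp add: loc_poly_ring_def)

lemma poly1_nz: "poly g 0 = (1::'a::idom) \<Longrightarrow> g \<noteq> 0"
  by auto

lemma sr_loc: "sr (loc_poly_ring :: 'a::idom poly fract set)"
  unfolding sr_def
proof (intro conjI ballI)
  show "(0::'a poly fract) \<in> loc_poly_ring" unfolding loc_mem
    by (intro exI[of _ 0] exI[of _ 1]) (simp add: Zero_fract_def)
  show "(1::'a poly fract) \<in> loc_poly_ring" unfolding loc_mem
    by (intro exI[of _ 1] exI[of _ 1]) (simp add: One_fract_def)
  fix x y :: "'a poly fract"
  assume "x \<in> loc_poly_ring" "y \<in> loc_poly_ring"
  then obtain f g f' g' where xy: "x = Fract f g" "poly g 0 = 1" "y = Fract f' g'" "poly g' 0 = 1"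
    unfolding loc_mem by blast
  have nz: "g \<noteq> 0" "g' \<noteq> 0" using xy poly1_nz by blast+
  show "x + y \<in> loc_poly_ring" unfolding loc_mem
    using xy nz by (intro exI[of _ "f * g' + f' * g"] exI[of _ "g * g'"]) simp
  show "x * y \<in> loc_poly_ring" unfolding loc_mem
    using xy nz by (intro exI[of _ "f * f'"] exI[of _ "g * g'"]) simp
  show "- x \<in> loc_poly_ring" unfolding loc_mem
    using xy nz by (intro exI[of _ "- f"] exI[of _ "g"]) simp
qed

lemma dom_mem: "b \<noteq> 0 \<Longrightarrow> Fract u b \<in> (dom_ring :: 'a::idom fract set) \<longleftrightarrow> b dvd u"
  unfolding dom_ring_def
proof
  assume "b \<noteq> 0" "Fract u b \<in> range (\<lambda>a. Fract a 1)"
  then obtain d where "Fract u b = Fract d 1" by auto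
  then have "u = d * b" using \<open>b \<noteq> 0\<close> by (simp add: eq_fract(1))
  then show "b dvd u" by simp
next
  assume "b \<noteq> 0" "b dvd u"
  then obtain d where "u = b * d" by blast
  then have "Fract u b = Fract d 1" using \<open>b \<noteq> 0\<close> by (simp add: eq_fract(1))
  then show "Fract u b \<in> range (\<lambda>a. Fract a 1)" by auto
qed

definition pid :: "'a::idom set \<Rightarrow> bool" where
  "pid I \<longleftrightarrow> 0 \<in> I \<and> (\<forall>a\<in>I. \<forall>b\<in>I. a + b \<in> I) \<and> (\<forall>r. \<forall>a\<in>I. r * a \<in> I) \<and> 1 \<notin> I
     \<and> (\<forall>a b. a * b \<in> I \<longrightarrow> a \<in> I \<or> b \<in> I)"

definition Pa :: "'a::idom fract set \<Rightarrow> 'a set" where "Pa P = {a. Fract a 1 \<in> P}"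

lemma pid_Pa: assumes "is_prime_ideal (dom_ring :: 'a::idom fract set) P" shows "pid (Pa P)"
proof -
  have i: "is_ideal dom_ring P" "P \<noteq> dom_ring"
    and pr: "\<forall>a\<in>dom_ring. \<forall>b\<in>dom_ring. a * b \<in> P \<longrightarrow> a \<in> P \<or> b \<in> P"
    using assms by (auto simp: is_prime_ideal_def)
  have D: "\<And>a::'a. Fract a 1 \<in> dom_ring" by (simp add: dom_ring_def)
  have P1: "1 \<notin> P" using ideal_one[OF sr_dom i(1)] i(2) by simp
  have I: "P \<subseteq> dom_ring" "0 \<in> P" "\<forall>x\<in>P. \<forall>y\<in>P. x + y \<in> P" "\<forall>r\<in>dom_ring. \<forall>x\<in>P. r * x \<in> P"
    using i(1) by (auto simp: is_ideal_def)
  show ?thesis unfolding pid_def Pa_def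
  proof (intro conjI allI ballI impI; simp only: mem_Collect_eq)
    show "Fract 0 1 \<in> P" using I(2) by (simp add: Zero_fract_def)
    show "Fract 1 1 \<notin> P" using P1 by (simp add: One_fract_def)
    fix a b :: 'a
    { assume "Fract a 1 \<in> P" "Fract b 1 \<in> P"
      then have "Fract a 1 + Fract b 1 \<in> P" using I(3) by blast
      then show "Fract (a+b) 1 \<in> P" by simp }
    { assume "Fract b 1 \<in> P"
      then have "Fract a 1 * Fract b 1 \<in> P" using I(4) D by blast
      then show "Fract (a*b) 1 \<in> P" by simp }
    { assume "Fract (a*b) 1 \<in> P"
      then have "Fract a 1 * Fract b 1 \<in> P" by simp
      then show "Fract a 1 \<in> P \<or> Fract b 1 \<in> P" using pr D by blast }
  qed
qed

definition PX :: "'a::idom set \<Rightarrow> 'a poly set" where "PX I = {f. \<forall>i. coeff f i \<in> I}"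

lemma pid_sum: "finite A \<Longrightarrow> pid I \<Longrightarrow> (\<forall>k\<in>A. f k \<in> I) \<Longrightarrow> sum f A \<in> I"
proof (induction A rule: finite_induct) qed (auto simp: pid_def)

lemma pid_neg: "pid I \<Longrightarrow> a \<in> I \<Longrightarrow> -a \<in> I"
  unfolding pid_def by (metis mult_minus1)

lemma PX_0: "pid I \<Longrightarrow> 0 \<in> PX I" by (simp add: PX_def pid_def)

lemma PX_add: "pid I \<Longrightarrow> f \<in> PX I \<Longrightarrow> g \<in> PX I \<Longrightarrow> f + g \<in> PX I"
  by (simp add: PX_def pid_def)

lemma PX_mult: assumes "pid I" "f \<in> PX I" shows "r * f \<in> PX I" "f * r \<in> PX I"
proof -
  show rf: "r * f \<in> PX I" unfolding PX_def mem_Collect_eq coeff_mult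
  proof
    fix n show "(\<Sum>i\<le>n. coeff r i * coeff f (n - i)) \<in> I"
      by (rule pid_sum) (use assms in \<open>auto simp: PX_def pid_def\<close>)
  qed
  then show "f * r \<in> PX I" by (simp add: mult.commute)
qed

lemma PX_unit: "pid I \<Longrightarrow> poly g 0 = 1 \<Longrightarrow> g \<notin> PX I"
  unfolding PX_def pid_def poly_0_coeff_0 by (metis mem_Collect_eq)

lemma PX_prime: assumes I: "pid I" and pq: "p * q \<in> PX I"
  shows "p \<in> PX I \<or> q \<in> PX I"
proof (rule ccontr)
  assume "\<not> (p \<in> PX I \<or> q \<in> PX I)"
  then have "\<exists>i. coeff p i \<notin> I" "\<exists>j. coeff q j \<notin> I" by (auto simp: PX_def)
  define i where "i = (LEAST i. coeff p i \<notin> I)"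
  define j where "j = (LEAST j. coeff q j \<notin> I)"
  have pi: "coeff p i \<notin> I" "\<And>k. k < i \<Longrightarrow> coeff p k \<in> I"
    using \<open>\<exists>i. coeff p i \<notin> I\<close> unfolding i_def
    by (rule LeastI_ex[where P="\<lambda>i. coeff p i \<notin> I"]) (use not_less_Least in blast)
  have qj: "coeff q j \<notin> I" "\<And>k. k < j \<Longrightarrow> coeff q k \<in> I"
    using \<open>\<exists>j. coeff q j \<notin> I\<close> unfolding j_def
    by (rule LeastI_ex[where P="\<lambda>i. coeff q i \<notin> I"]) (use not_less_Least in blast)
  have "coeff (p*q) (i+j) = (\<Sum>k\<in>insert i ({..i+j} - {i}). coeff p k * coeff q (i+j-k))"
    unfolding coeff_mult by (rule sum.cong) auto
  also have "\<dots> = coeff p i * coeff q j + (\<Sum>k\<in>{..i+j} - {i}. coeff p k * coeff q (i+j-k))"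
    by (subst sum.insert) auto
  finally have eq: "coeff p i * coeff q j = coeff (p*q) (i+j) + - (\<Sum>k\<in>{..i+j} - {i}. coeff p k * coeff q (i+j-k))"
    by simp
  have rest: "(\<Sum>k\<in>{..i+j} - {i}. coeff p k * coeff q (i+j-k)) \<in> I"
  proof (rule pid_sum[OF _ I], simp, intro ballI)
    fix k assume k: "k \<in> {..i+j} - {i}"
    show "coeff p k * coeff q (i+j-k) \<in> I"
    proof (cases "k < i")
      case True then show ?thesis using pi(2) I unfolding pid_def by (metis mult.commute)
    next
      case False then have "i + j - k < j" using k by auto
      then show ?thesis using qj(2) I unfolding pid_def by blast
    qed
  qed
  have "coeff (p*q) (i+j) \<in> I" using pq by (simp add: PX_def)
  moreover have "- (\<Sum>k\<in>{..i+j} - {i}. coeff p k * coeff q (i+j-k)) \<in> I"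
    using pid_neg[OF I rest] .
  ultimately have "coeff p i * coeff q j \<in> I" unfolding eq using I
    unfolding pid_def by blast
  then show False using I pi(1) qj(1) unfolding pid_def by blast
qed

definition ext :: "'a::idom fract set \<Rightarrow> 'a poly fract set" where
  "ext P = {Fract f g | f g. poly g 0 = 1 \<and> f \<in> PX (Pa P)}"

lemma ext_sub: "ext P \<subseteq> loc_poly_ring"
  unfolding ext_def loc_poly_ring_def by blast

lemma ext_rep: assumes I: "pid (Pa P)" and x: "x \<in> ext P" "x = Fract f g" "poly g 0 = 1"
  shows "f \<in> PX (Pa P)"
proof -
  obtain h k where hk: "x = Fract h k" "poly k 0 = 1" "h \<in> PX (Pa P)" using x unfolding ext_def by blast
  have "Fract f g = Fract h k" using hk x by simp
  moreover have "g \<noteq> 0" "k \<noteq> 0" using hk x poly1_nz by blast+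
  ultimately have "f * k = h * g" by (simp add: eq_fract(1))
  moreover have "h * g \<in> PX (Pa P)" using PX_mult[OF I hk(3)] by blast
  ultimately have "f * k \<in> PX (Pa P)" by simp
  then show ?thesis using PX_prime[OF I] PX_unit[OF I hk(2)] by blast
qed

lemma ext_ideal: fixes P :: "'a::idom fract set" assumes I: "pid (Pa P)" shows "is_ideal loc_poly_ring (ext P)"
  unfolding is_ideal_def
proof (intro conjI ballI)
  show "ext P \<subseteq> loc_poly_ring" by (rule ext_sub)
  show "0 \<in> ext P" unfolding ext_def using PX_0[OF I]
    by (intro CollectI exI[of _ 0] exI[of _ 1]) (simp add: Zero_fract_def)
  fix x y :: "'a poly fract" assume "x \<in> ext P" "y \<in> ext P"
  then obtain f g f' g' where xy: "x = Fract f g" "poly g 0 = 1" "f \<in> PX (Pa P)"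
     "y = Fract f' g'" "poly g' 0 = 1" "f' \<in> PX (Pa P)" unfolding ext_def by blast
  have "f * g' + f' * g \<in> PX (Pa P)" using PX_add[OF I] PX_mult[OF I] xy by blast
  moreover have "g \<noteq> 0" "g' \<noteq> 0" using xy poly1_nz by blast+
  ultimately show "x + y \<in> ext P" unfolding ext_def using xy
    by (intro CollectI exI[of _ "f * g' + f' * g"] exI[of _ "g * g'"]) simp
next
  fix r x :: "'a poly fract" assume "r \<in> loc_poly_ring" "x \<in> ext P"
  then obtain f g h k where xy: "x = Fract f g" "poly g 0 = 1" "f \<in> PX (Pa P)"
     "r = Fract h k" "poly k 0 = 1" unfolding ext_def loc_mem by blast
  have "h * f \<in> PX (Pa P)" using PX_mult[OF I] xy by blast
  then show "r * x \<in> ext P" unfolding ext_def using xy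
    by (intro CollectI exI[of _ "h * f"] exI[of _ "k * g"]) simp
qed

lemma ext_prime: fixes P :: "'a::idom fract set" assumes I: "pid (Pa P)" shows "is_prime_ideal loc_poly_ring (ext P)"
  unfolding is_prime_ideal_def
proof (intro conjI ballI impI)
  show "is_ideal loc_poly_ring (ext P)" by (rule ext_ideal[OF I])
  show "ext P \<noteq> loc_poly_ring"
  proof
    assume "ext P = loc_poly_ring"
    moreover have "Fract 1 1 \<in> loc_poly_ring" unfolding loc_mem
      by (intro exI[of _ 1] exI[of _ 1]) simp
    ultimately have "Fract 1 1 \<in> ext P" by simp
    then have "(1::'a poly) \<in> PX (Pa P)" using ext_rep[OF I] by simp
    then show False using PX_unit[OF I, of 1] by simp
  qed
  fix a b :: "'a poly fract" assume ab: "a \<in> loc_poly_ring" "b \<in> loc_poly_ring" "a * b \<in> ext P"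
  then obtain f g f' g' where xy: "a = Fract f g" "poly g 0 = 1" 
     "b = Fract f' g'" "poly g' 0 = 1" unfolding loc_mem by blast
  have "a * b = Fract (f * f') (g * g')" using xy by simp
  then have "f * f' \<in> PX (Pa P)" using ext_rep[OF I ab(3)] xy by simp
  then have "f \<in> PX (Pa P) \<or> f' \<in> PX (Pa P)" using PX_prime[OF I] by blast
  then show "a \<in> ext P \<or> b \<in> ext P" unfolding ext_def using xy by blast
qed

lemma dvd_coeff_cancel:
  fixes w g :: "'a::idom poly"
  assumes g: "poly g 0 = 1" and d: "\<And>n. b dvd coeff (w * g) n"
  shows "b dvd coeff w n"
proof (induction n rule: less_induct)
  case (less n)
  have "coeff (w * g) n = (\<Sum>i\<in>insert n {..<n}. coeff w i * coeff g (n - i))"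
    unfolding coeff_mult by (rule sum.cong) auto
  also have "\<dots> = coeff w n * coeff g 0 + (\<Sum>i<n. coeff w i * coeff g (n - i))"
    by (subst sum.insert) auto
  also have "\<dots> = coeff w n + (\<Sum>i<n. coeff w i * coeff g (n - i))"
    using g by (simp add: poly_0_coeff_0)
  finally have eq: "coeff (w * g) n = coeff w n + (\<Sum>i<n. coeff w i * coeff g (n - i))" .
  have "b dvd (\<Sum>i<n. coeff w i * coeff g (n - i))"
    using less by (intro dvd_sum) auto
  then show ?case using d[of n] unfolding eq by (simp add: dvd_add_left_iff)
qed

lemma Fract1_zero: "Fract a 1 = (0::'a::idom fract) \<longleftrightarrow> a = 0"
  by (simp add: Zero_fract_def eq_fract(1))


lemma PX_zero: "PX {0::'a::idom} = {0}"
proof (intro set_eqI iffI)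
  fix f :: "'a poly" assume "f \<in> PX {0}"
  then have "\<forall>i. coeff f i = 0" by (simp add: PX_def)
  then have "f = 0" by (intro poly_eqI) simp
  then show "f \<in> {0}" by simp
next
  fix f :: "'a poly" assume "f \<in> {0}"
  then show "f \<in> PX {0}" by (simp add: PX_def)
qed

lemma Pa_zero: "Pa {0::'a::idom fract} = {0}"
  unfolding Pa_def using Fract1_zero by auto

lemma ext_zero: "ext {0::'a::idom fract} = {0}"
proof (intro set_eqI iffI)
  fix x :: "'a poly fract" assume "x \<in> ext {0}"
  then obtain f g where "x = Fract f g" "f \<in> PX (Pa {0::'a fract})" unfolding ext_def by blast
  then have "x = Fract 0 g" unfolding Pa_zero PX_zero by simp
  then show "x \<in> {0}" by (simp add: fract_collapse)
next
  fix x :: "'a poly fract" assume "x \<in> {0}"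
  then have x: "x = Fract 0 1" by (simp add: fract_collapse)
  have "(0::'a poly) \<in> PX (Pa {0::'a fract})" unfolding Pa_zero PX_zero by simp
  then show "x \<in> ext {0}" unfolding ext_def x
    by (intro CollectI exI[of _ "0::'a poly"] exI[of _ "1::'a poly"]) simp
qed


lemma ext_strict: fixes P :: "'a::idom fract set"
  assumes I: "pid (Pa P')" and sub: "P' \<subset> P" "P \<subseteq> dom_ring"
  shows "ext P' \<subset> ext P"
proof -
  have PP: "Pa P' \<subseteq> Pa P" using sub unfolding Pa_def by auto
  then have "PX (Pa P') \<subseteq> PX (Pa P)" unfolding PX_def by auto
  then have s: "ext P' \<subseteq> ext P" unfolding ext_def by blast
  obtain z where z: "z \<in> P" "z \<notin> P'" using sub by auto
  then obtain a where a: "z = Fract a 1" using sub unfolding dom_ring_def by auto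
  have z0: "0 \<in> Pa P" using I PP unfolding pid_def by auto
  have "\<forall>i. coeff [:a:] i \<in> Pa P"
  proof
    fix i show "coeff [:a:] i \<in> Pa P"
    proof (cases i)
      case 0 then show ?thesis using z a by (simp add: Pa_def)
    next
      case (Suc j) then show ?thesis using z0 by simp
    qed
  qed
  then have "[:a:] \<in> PX (Pa P)" unfolding PX_def by simp
  then have "Fract [:a:] 1 \<in> ext P" unfolding ext_def
    by (intro CollectI exI[of _ "[:a:]"] exI[of _ "1::'a poly"]) simp
  moreover have "Fract [:a:] 1 \<notin> ext P'"
  proof
    assume "Fract [:a:] 1 \<in> ext P'"
    then have "[:a:] \<in> PX (Pa P')" using ext_rep[OF I] by simp
    then have "coeff [:a:] 0 \<in> Pa P'" unfolding PX_def by blast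
    then have "a \<in> Pa P'" by simp
    then show False using z a unfolding Pa_def by simp
  qed
  ultimately show ?thesis using s by blast
qed

lemma ext_mem: "x \<in> ext P \<longleftrightarrow> (\<exists>f g. x = Fract f g \<and> poly g 0 = 1 \<and> f \<in> PX (Pa P))"
  unfolding ext_def by simp

lemma ext_t: fixes P :: "'a::idom fract set"
  assumes Pt: "is_prime_t_ideal dom_ring P" shows "is_t_ideal loc_poly_ring (ext P)"
proof -
  have Pp: "is_prime_ideal dom_ring P" and Ptt: "is_t_ideal dom_ring P"
    using Pt by (auto simp: is_prime_t_ideal_def)
  have I: "pid (Pa P)" by (rule pid_Pa[OF Pp])
  show ?thesis
  proof (rule t_idealI[OF sr_loc ext_ideal[OF I]])
    fix S assume S: "finite S" "S \<subseteq> ext P" "\<exists>s\<in>S. s \<noteq> 0"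
    show "vS loc_poly_ring S \<subseteq> ext P"
    proof
      fix x assume x: "x \<in> vS loc_poly_ring S"
      have "\<forall>s\<in>S. \<exists>p. s = Fract (fst p) (snd p) \<and> poly (snd p) 0 = 1 \<and> fst p \<in> PX (Pa P)"
      proof
        fix s assume "s \<in> S"
        then have "s \<in> ext P" using S by blast
        then obtain f g where "s = Fract f g" "poly g 0 = 1" "f \<in> PX (Pa P)" unfolding ext_mem by blast
        then show "\<exists>p. s = Fract (fst p) (snd p) \<and> poly (snd p) 0 = 1 \<and> fst p \<in> PX (Pa P)"
          by (intro exI[of _ "(f, g)"]) simp
      qed
      from bchoice[OF this] obtain FG where FG: "\<forall>s\<in>S. s = Fract (fst (FG s)) (snd (FG s)) \<and> poly (snd (FG s)) 0 = 1 \<and> fst (FG s) \<in> PX (Pa P)"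
        by blast
      define fs where "fs s = fst (FG s)" for s
      define gs where "gs s = snd (FG s)" for s
      have fg: "\<And>s. s \<in> S \<Longrightarrow> s = Fract (fs s) (gs s)" "\<And>s. s \<in> S \<Longrightarrow> poly (gs s) 0 = 1"
        "\<And>s. s \<in> S \<Longrightarrow> fs s \<in> PX (Pa P)" using FG unfolding fs_def gs_def by simp_all
      have xv: "\<And>y. (\<forall>s\<in>S. y * s \<in> loc_poly_ring) \<Longrightarrow> x * y \<in> loc_poly_ring"
        using x unfolding vS_def by blast
      have "\<forall>s\<in>S. 1 * s \<in> loc_poly_ring" using S ext_sub by auto
      then have "x * 1 \<in> loc_poly_ring" by (rule xv)
      then obtain F0 G0 where FG0: "x = Fract F0 G0" "poly G0 0 = 1" unfolding loc_mem by auto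
      define C where "C = (\<lambda>p. Fract (coeff (fs (fst p)) (snd p)) (1::'a)) ` (SIGMA s:S. {..degree (fs s)})"
      have Cfin: "finite C" unfolding C_def using S(1) by (intro finite_imageI finite_SigmaI) auto
      have Csub: "C \<subseteq> P"
      proof
        fix c assume "c \<in> C"
        then obtain s i where si: "s \<in> S" "c = Fract (coeff (fs s) i) 1" unfolding C_def by auto
        then have "coeff (fs s) i \<in> Pa P" using fg(3)[OF si(1)] unfolding PX_def by blast
        then show "c \<in> P" using si unfolding Pa_def by simp
      qed
      have Cnz: "\<exists>c\<in>C. c \<noteq> 0"
      proof -
        obtain s0 where s0: "s0 \<in> S" "s0 \<noteq> 0" using S by blast
        have "fs s0 \<noteq> 0"
        proof
          assume "fs s0 = 0"
          then have "s0 = Fract 0 (gs s0)" using fg(1)[OF s0(1)] by simp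
          then show False using s0 by (simp add: fract_collapse)
        qed
        then have "coeff (fs s0) (degree (fs s0)) \<noteq> 0" by simp
        moreover have "Fract (coeff (fs s0) (degree (fs s0))) 1 \<in> C"
          unfolding C_def using s0 by (intro image_eqI[of _ _ "(s0, degree (fs s0))"]) auto
        ultimately show ?thesis using Fract1_zero by blast
      qed
      have vsub: "vS dom_ring C \<subseteq> P" by (rule t_ideal_vS[OF Ptt sr_dom Cfin Csub Cnz])
      have "Fract (coeff F0 j) 1 \<in> vS dom_ring C" for j
        unfolding vS_def
      proof (intro CollectI allI impI)
        fix y :: "'a fract" assume hy: "\<forall>c\<in>C. y * c \<in> dom_ring"
        obtain a b where y: "y = Fract a b" "b \<noteq> 0" by (cases y) auto
        have dv: "b dvd a * coeff (fs s) i" if s: "s \<in> S" for s i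
        proof (cases "i \<le> degree (fs s)")
          case True
          then have "Fract (coeff (fs s) i) 1 \<in> C"
            unfolding C_def using s by (intro image_eqI[of _ _ "(s, i)"]) auto
          then have "y * Fract (coeff (fs s) i) 1 \<in> dom_ring" using hy by blast
          then have "Fract (a * coeff (fs s) i) b \<in> dom_ring" using y by simp
          then show ?thesis using dom_mem[OF y(2)] by blast
        next
          case False then have "coeff (fs s) i = 0" by (simp add: coeff_eq_0)
          then show ?thesis by simp
        qed
        define Y where "Y = Fract [:a:] [:b:]"
        have b0: "[:b:] \<noteq> 0" using y by simp
        have "\<forall>s\<in>S. Y * s \<in> loc_poly_ring"
        proof
          fix s assume s: "s \<in> S"
          have "[:b:] dvd smult a (fs s)" unfolding const_poly_dvd_iff using dv[OF s] by simp
          then obtain h where h: "smult a (fs s) = [:b:] * h" by (elim dvdE)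
          have "Y * s = Fract ([:a:] * fs s) ([:b:] * gs s)" unfolding Y_def using fg(1)[OF s]
            by (metis mult_fract)
          also have "\<dots> = Fract ([:b:] * h) ([:b:] * gs s)" using h by simp
          also have "\<dots> = Fract h (gs s)" by (rule mult_fract_cancel[OF b0])
          finally show "Y * s \<in> loc_poly_ring" unfolding loc_mem using fg(2)[OF s] by blast
        qed
        then have "x * Y \<in> loc_poly_ring" by (rule xv)
        then obtain h' g' where hg: "x * Y = Fract h' g'" "poly g' 0 = 1" unfolding loc_mem by blast
        have "x * Y = Fract (F0 * [:a:]) (G0 * [:b:])" unfolding Y_def FG0(1) by simp
        then have eq1: "Fract (F0 * [:a:]) (G0 * [:b:]) = Fract h' g'" using hg by simp
        have G0: "G0 \<noteq> 0" "g' \<noteq> 0" using FG0(2) hg(2) poly1_nz by blast+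
        then have "G0 * [:b:] \<noteq> 0" using b0 by simp
        then have "F0 * [:a:] * g' = h' * (G0 * [:b:])" using eq1 G0(2) eq_fract(1) by blast
        then have "smult a F0 * g' = [:b:] * (h' * G0)" by (simp add: ac_simps)
        then have "[:b:] dvd smult a F0 * g'" by (rule dvdI)
        then have "\<And>n. b dvd coeff (smult a F0 * g') n" unfolding const_poly_dvd_iff by blast
        then have "b dvd coeff (smult a F0) j" by (rule dvd_coeff_cancel[OF hg(2)])
        then have "b dvd coeff F0 j * a" by (simp add: mult.commute)
        then have "Fract (coeff F0 j * a) b \<in> dom_ring" using dom_mem[OF y(2)] by blast
        then show "Fract (coeff F0 j) 1 * y \<in> dom_ring" using y by simp
      qed
      then have "\<forall>j. coeff F0 j \<in> Pa P" using vsub unfolding Pa_def by blast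
      then have "F0 \<in> PX (Pa P)" unfolding PX_def by blast
      then show "x \<in> ext P" unfolding ext_mem using FG0 by blast
    qed
  qed
qed

lemma R_mem: "x \<in> poly_ring \<longleftrightarrow> (\<exists>f. x = Fract f 1)"
  unfolding poly_ring_def by auto

lemma R_sub_T: "(poly_ring :: 'a::idom poly fract set) \<subseteq> loc_poly_ring"
proof
  fix x :: "'a poly fract" assume "x \<in> poly_ring"
  then obtain f where "x = Fract f 1" unfolding R_mem by blast
  then show "x \<in> loc_poly_ring" unfolding loc_mem by (intro exI[of _ f] exI[of _ 1]) simp
qed

lemma Fract_g_inv: "g \<noteq> 0 \<Longrightarrow> Fract g 1 * Fract 1 g = (1::'a::idom fract)"
  by (simp add: One_fract_def eq_fract(1))

lemma T_denom: assumes "x \<in> (loc_poly_ring :: 'a::idom poly fract set)"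
  shows "\<exists>g. poly g 0 = 1 \<and> x * Fract g 1 \<in> poly_ring"
proof -
  obtain f g where fg: "x = Fract f g" "poly g 0 = 1" using assms unfolding loc_mem by blast
  then have g0: "g \<noteq> 0" using poly1_nz by blast
  have "x * Fract g 1 = Fract (f * g) (g * 1)" using fg by simp
  also have "\<dots> = Fract f 1" using g0 by (simp add: eq_fract(1))
  finally show ?thesis using fg unfolding R_mem by blast
qed

lemma Fract_in_R: "Fract g 1 \<in> poly_ring" unfolding R_mem by blast

lemma common_denom: "finite S \<Longrightarrow> (\<forall>s\<in>S. z s \<in> (loc_poly_ring :: 'a::idom poly fract set)) \<Longrightarrow>
  \<exists>g. poly g 0 = 1 \<and> (\<forall>s\<in>S. z s * Fract g 1 \<in> poly_ring)"
proof (induction S rule: finite_induct)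
  case empty then show ?case by (intro exI[of _ 1]) simp
next
  case (insert a F)
  then obtain g where g: "poly g 0 = 1" "\<forall>s\<in>F. z s * Fract g 1 \<in> poly_ring" by auto
  obtain g1 where g1: "poly g1 0 = 1" "z a * Fract g1 1 \<in> poly_ring" using T_denom insert(4) by blast
  have mul: "\<And>u v. u \<in> poly_ring \<Longrightarrow> v \<in> poly_ring \<Longrightarrow> u * v \<in> (poly_ring :: 'a poly fract set)"
    using sr_poly unfolding sr_def by blast
  have "\<forall>s\<in>insert a F. z s * Fract (g * g1) 1 \<in> poly_ring"
  proof
    fix s assume s: "s \<in> insert a F"
    have e: "Fract (g * g1) 1 = Fract g 1 * Fract g1 (1::'a poly)" by simp
    show "z s * Fract (g * g1) 1 \<in> poly_ring"
    proof (cases "s = a")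
      case True
      have "z s * Fract (g * g1) 1 = (z a * Fract g1 1) * Fract g 1" using True e by (simp add: ac_simps)
      then show ?thesis using mul[OF g1(2) Fract_in_R] by simp
    next
      case False then have "s \<in> F" using s by simp
      have "z s * Fract (g * g1) 1 = (z s * Fract g 1) * Fract g1 1" using e by (simp add: ac_simps)
      also have "\<dots> \<in> poly_ring" using mul[OF _ Fract_in_R] g(2) \<open>s \<in> F\<close> by blast
      finally show ?thesis .
    qed
  qed
  moreover have "poly (g * g1) 0 = 1" using g g1 by simp
  ultimately show ?case by blast
qed

lemma contr_prime_t: fixes Q :: "'a::idom poly fract set"
  assumes Q: "is_prime_t_ideal loc_poly_ring Q"
  shows "is_prime_t_ideal poly_ring (Q \<inter> poly_ring)"
proof -
  have Qp: "is_prime_ideal loc_poly_ring Q" and Qt: "is_t_ideal loc_poly_ring Q"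
    using Q by (auto simp: is_prime_t_ideal_def)
  have Qi: "is_ideal loc_poly_ring Q" and QT: "Q \<noteq> loc_poly_ring"
    and Qpr: "\<forall>a\<in>loc_poly_ring. \<forall>b\<in>loc_poly_ring. a * b \<in> Q \<longrightarrow> a \<in> Q \<or> b \<in> Q"
    using Qp by (auto simp: is_prime_ideal_def)
  have RT: "(poly_ring :: 'a poly fract set) \<subseteq> loc_poly_ring" by (rule R_sub_T)
  have srR: "sr (poly_ring :: 'a poly fract set)" by (rule sr_poly)
  have Ii: "is_ideal poly_ring (Q \<inter> poly_ring)"
    using Qi srR RT unfolding is_ideal_def sr_def by blast
  have one: "1 \<notin> Q" using ideal_one[OF sr_loc Qi] QT by simp
  have "1 \<in> (poly_ring :: 'a poly fract set)" using srR unfolding sr_def by blast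
  then have prp: "Q \<inter> poly_ring \<noteq> poly_ring" using one by blast
  have pr: "\<forall>a\<in>poly_ring. \<forall>b\<in>poly_ring. a * b \<in> Q \<inter> poly_ring \<longrightarrow> a \<in> Q \<inter> poly_ring \<or> b \<in> Q \<inter> poly_ring"
    using Qpr RT by blast
  have tt: "is_t_ideal poly_ring (Q \<inter> poly_ring)"
  proof (rule t_idealI[OF srR Ii])
    fix S assume S: "finite S" "S \<subseteq> Q \<inter> poly_ring" "\<exists>s\<in>S. s \<noteq> 0"
    show "vS poly_ring S \<subseteq> Q \<inter> poly_ring"
    proof
      fix x assume x: "x \<in> vS poly_ring S"
      have xv: "\<And>y. (\<forall>s\<in>S. y * s \<in> poly_ring) \<Longrightarrow> x * y \<in> poly_ring"
        using x unfolding vS_def by blast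
      have "\<forall>s\<in>S. 1 * s \<in> poly_ring" using S by auto
      then have "x * 1 \<in> poly_ring" by (rule xv)
      then have xR: "x \<in> poly_ring" by simp
      have SQ: "S \<subseteq> Q" using S by blast
      have "x \<in> vS loc_poly_ring S" unfolding vS_def
      proof (intro CollectI allI impI)
        fix y assume hy: "\<forall>s\<in>S. y * s \<in> loc_poly_ring"
        obtain g where g: "poly g 0 = 1" "\<forall>s\<in>S. y * s * Fract g 1 \<in> poly_ring"
          using common_denom[OF S(1), of "\<lambda>s. y * s"] hy by blast
        have "\<forall>s\<in>S. (y * Fract g 1) * s \<in> poly_ring" using g(2) by (simp add: ac_simps)
        then have xY: "x * (y * Fract g 1) \<in> poly_ring" by (rule xv)
        have g0: "g \<noteq> 0" using g(1) poly1_nz by blast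
        have eq: "x * y = (x * (y * Fract g 1)) * Fract 1 g"
          using Fract_g_inv[OF g0] by (simp add: ac_simps)
        have "Fract 1 g \<in> loc_poly_ring" unfolding loc_mem using g(1) by blast
        moreover have "x * (y * Fract g 1) \<in> loc_poly_ring" using xY RT by blast
        ultimately have "(x * (y * Fract g 1)) * Fract 1 g \<in> loc_poly_ring"
          using sr_loc unfolding sr_def by blast
        then show "x * y \<in> loc_poly_ring" by (subst eq)
      qed
      then have "x \<in> Q" using t_ideal_vS[OF Qt sr_loc S(1) SQ S(3)] by blast
      then show "x \<in> Q \<inter> poly_ring" using xR by blast
    qed
  qed
  show ?thesis unfolding is_prime_t_ideal_def is_prime_ideal_def using Ii prp pr tt by blast
qed

lemma contr_strict: fixes Q :: "'a::idom poly fract set"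
  assumes sub: "Q' \<subset> Q" "Q \<subseteq> loc_poly_ring" and Q'i: "is_ideal loc_poly_ring Q'"
    and Qi: "is_ideal loc_poly_ring Q"
  shows "Q' \<inter> poly_ring \<subset> Q \<inter> poly_ring"
proof -
  obtain z where z: "z \<in> Q" "z \<notin> Q'" using sub by blast
  then obtain g where g: "poly g 0 = 1" "z * Fract g 1 \<in> poly_ring" using T_denom sub by blast
  have "Fract g 1 \<in> loc_poly_ring" using Fract_in_R R_sub_T by blast
  then have "Fract g 1 * z \<in> Q" using Qi z unfolding is_ideal_def by blast
  then have zQ: "z * Fract g 1 \<in> Q" by (simp add: mult.commute)
  have "z * Fract g 1 \<notin> Q'"
  proof
    assume a: "z * Fract g 1 \<in> Q'"
    have "Fract 1 g \<in> loc_poly_ring" unfolding loc_mem using g(1) by blast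
    then have "Fract 1 g * (z * Fract g 1) \<in> Q'" using Q'i a unfolding is_ideal_def by blast
    moreover have "g \<noteq> 0" using g(1) poly1_nz by blast
    ultimately have "z \<in> Q'" using Fract_g_inv[of g] by (simp add: ac_simps)
    then show False using z by blast
  qed
  then show ?thesis using zQ g(2) sub by blast
qed

lemma contr_zero: "{0::'a::idom poly fract} \<inter> poly_ring = {0}"
  using sr_poly unfolding sr_def by blast

lemma max_prime_t: "sr E \<Longrightarrow> is_max_t_ideal E M \<Longrightarrow> is_prime_t_ideal E M"
  using max_t_prime[of E M] unfolding is_prime_t_ideal_def is_max_t_ideal_def by blast

lemma partA: fixes P :: "'a::idom fract set"
  assumes P: "is_max_t_ideal dom_ring P" and c0: "c 0 = P" and ch: "tchain dom_ring c n"
  shows "\<exists>Q. is_max_t_ideal (loc_poly_ring :: 'a poly fract set) Q \<and> enat n \<le> t_ht loc_poly_ring Q"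
proof -
  define e where "e i = ext (c i)" for i
  have cp: "\<And>i. i \<le> n \<Longrightarrow> is_prime_t_ideal dom_ring (c i)" using ch by (simp add: tchain_def)
  have cpi: "\<And>i. i \<le> n \<Longrightarrow> pid (Pa (c i))"
    using cp pid_Pa unfolding is_prime_t_ideal_def by blast
  have csub: "\<And>i. i \<le> n \<Longrightarrow> c i \<subseteq> dom_ring"
    using cp unfolding is_prime_t_ideal_def is_prime_ideal_def is_ideal_def by blast
  have ept: "\<And>i. i \<le> n \<Longrightarrow> is_prime_t_ideal loc_poly_ring (e i)"
    unfolding e_def is_prime_t_ideal_def using ext_prime[OF cpi] ext_t[OF cp] by simp
  have tch: "tchain loc_poly_ring e n" unfolding tchain_def
  proof (intro conjI allI impI)
    show "e n = {0}" using ch unfolding e_def tchain_def by (simp add: ext_zero)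
    fix i
    show "e (Suc i) \<subset> e i" if "i < n"
    proof -
      have "c (Suc i) \<subset> c i" using ch that by (simp add: tchain_def)
      moreover have "pid (Pa (c (Suc i)))" using cpi that by simp
      moreover have "c i \<subseteq> dom_ring" using csub that by simp
      ultimately show ?thesis unfolding e_def using ext_strict by blast
    qed
    show "is_prime_t_ideal loc_poly_ring (e i)" if "i \<le> n" using ept that by blast
  qed
  have e0: "is_t_ideal loc_poly_ring (e 0)" "e 0 \<noteq> loc_poly_ring"
    using ept[of 0] unfolding is_prime_t_ideal_def is_prime_ideal_def by simp_all
  obtain Q where Q: "is_max_t_ideal loc_poly_ring Q" "e 0 \<subseteq> Q"
    using exists_max_t[OF sr_loc e0] by blast
  have "enat n \<le> t_ht loc_poly_ring Q"
    using t_ht_extend[OF tch max_prime_t[OF sr_loc Q(1)] Q(2)] by blast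
  then show ?thesis using Q by blast
qed

lemma partB: fixes Q :: "'a::idom poly fract set"
  assumes P: "is_max_t_ideal loc_poly_ring Q" and c0: "c 0 = Q" and ch: "tchain loc_poly_ring c n"
  shows "\<exists>M. is_max_t_ideal (poly_ring :: 'a poly fract set) M \<and> enat n \<le> t_ht poly_ring M"
proof -
  define e where "e i = c i \<inter> poly_ring" for i
  have cp: "\<And>i. i \<le> n \<Longrightarrow> is_prime_t_ideal loc_poly_ring (c i)" using ch by (simp add: tchain_def)
  have ci: "\<And>i. i \<le> n \<Longrightarrow> is_ideal loc_poly_ring (c i)"
    using cp unfolding is_prime_t_ideal_def is_prime_ideal_def by simp
  have csub: "\<And>i. i \<le> n \<Longrightarrow> c i \<subseteq> loc_poly_ring"
    using ci unfolding is_ideal_def by blast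
  have ept: "\<And>i. i \<le> n \<Longrightarrow> is_prime_t_ideal poly_ring (e i)"
    unfolding e_def by (rule contr_prime_t[OF cp])
  have tch: "tchain poly_ring e n" unfolding tchain_def
  proof (intro conjI allI impI)
    have "c n = {0}" using ch unfolding tchain_def by blast
    then show "e n = {0}" unfolding e_def using contr_zero by simp
    fix i
    show "e (Suc i) \<subset> e i" if "i < n"
    proof -
      have "c (Suc i) \<subset> c i" using ch that by (simp add: tchain_def)
      moreover have "c i \<subseteq> loc_poly_ring" "is_ideal loc_poly_ring (c (Suc i))" "is_ideal loc_poly_ring (c i)"
        using csub ci that by simp_all
      ultimately show ?thesis unfolding e_def by (rule contr_strict)
    qed
    show "is_prime_t_ideal poly_ring (e i)" if "i \<le> n" using ept that by blast
  qed
  have e0: "is_t_ideal poly_ring (e 0)" "e 0 \<noteq> poly_ring"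
    using ept[of 0] unfolding is_prime_t_ideal_def is_prime_ideal_def by simp_all
  obtain M where M: "is_max_t_ideal poly_ring M" "e 0 \<subseteq> M"
    using exists_max_t[OF sr_poly e0] by blast
  have "enat n \<le> t_ht poly_ring M"
    using t_ht_extend[OF tch max_prime_t[OF sr_poly M(1)] M(2)] by blast
  then show ?thesis using M by blast
qed

theorem mainTheorem14:
  shows "t_dim (dom_ring :: 'a::idom fract set) \<le> t_dim (loc_poly_ring :: 'a poly fract set)
       \<and> t_dim (loc_poly_ring :: 'a poly fract set) \<le> t_dim (poly_ring :: 'a poly fract set)"
proof
  show "t_dim (dom_ring :: 'a::idom fract set) \<le> t_dim (loc_poly_ring :: 'a poly fract set)"
    by (rule t_dim_le) (rule partA)
  show "t_dim (loc_poly_ring :: 'a poly fract set) \<le> t_dim (poly_ring :: 'a poly fract set)"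
    by (rule t_dim_le) (rule partB)
qed

end
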